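(* Under the standing setup below, \[ a_{-n-1} \sim \frac{\pi/4}{\arctan u_1}\, D_n \quad \text{as } n \to +\infty . \] In particular, $a_{-n-1} > 0$ for all sufficiently large $n$.
   Context: Standing setup: $a_0, a_1 \in \mathbb{Z}$ and $u_0 > u_1 > 0$ are rational numbers with $a_0 \arctan u_0 + a_1 \arctan u_1 = \pi/4$. Let $\alpha := \arctan u_0 / \arctan u_1$ (which is $>1$ and irrational), with infinite simple continued fraction expansion $\alpha = [q_0; q_1, q_2, \dots]$, $q_i \in \mathbb{N}$. The integers $a_{-n}$ for $n \geq 1$ are defined recursively by $a_{-n-1} := q_n a_{-n} + a_{-n+1}$ for all $n \in \mathbb{N}_0$. The sequences $N_k, D_k$ ($k \ge -2$) are defined by $N_{-2}=0$, $N_{-1}=1$, $D_{-2}=1$, $D_{-1}=0$, and $N_k = q_k N_{k-1} + N_{k-2}$, $D_k = q_k D_{k-1} + D_{k-2}$ for $k \in \mathbb{N}_0$; thus $N_n/D_n = [q_0; q_1, \dots, q_n]$ in lowest terms for $n \ge 0$. *)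

theory Defs
  imports Complex_Main "HOL-Library.Landau_Symbols"
begin

fun cf_rem :: "real \<Rightarrow> nat \<Rightarrow> real" where
  "cf_rem x 0 = x"
| "cf_rem x (Suc n) = 1 / frac (cf_rem x n)"

definition cf_q :: "real \<Rightarrow> nat \<Rightarrow> int" where
  "cf_q x n = \<lfloor>cf_rem x n\<rfloor>"

text \<open>Shifted denominators: cf_Dsh x k = D_{k-2}, i.e. D_{-2}=1, D_{-1}=0,
  D_k = q_k D_{k-1} + D_{k-2}.\<close>
fun cf_Dsh :: "real \<Rightarrow> nat \<Rightarrow> int" where
  "cf_Dsh x 0 = 1"
| "cf_Dsh x (Suc 0) = 0"
| "cf_Dsh x (Suc (Suc n)) = cf_q x n * cf_Dsh x (Suc n) + cf_Dsh x n"

text \<open>Shifted coefficients: coef_sh x a0 a1 k = a_{1-k}, i.e. coef_sh 0 = a_1,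
  coef_sh 1 = a_0, and a_{-n-1} = q_n a_{-n} + a_{-n+1}.\<close>
fun coef_sh :: "real \<Rightarrow> int \<Rightarrow> int \<Rightarrow> nat \<Rightarrow> int" where
  "coef_sh x a0 a1 0 = a1"
| "coef_sh x a0 a1 (Suc 0) = a0"
| "coef_sh x a0 a1 (Suc (Suc n)) = cf_q x n * coef_sh x a0 a1 (Suc n) + coef_sh x a0 a1 n"

end

theory Submission
  imports Defs
begin

lemma no_rat_sq3: "(u::rat)^2 \<noteq> 3"
proof
  assume h: "u^2 = 3"
  obtain a b where qb: "quotient_of u = (a,b)" by (cases "quotient_of u") auto
  have b0: "b > 0" using qb quotient_of_denom_pos by blast
  have cop: "coprime a b" using qb quotient_of_coprime by blast
  have "u = of_int a / of_int b" using qb quotient_of_div by blast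
  hence "(of_int a / of_int b)^2 = (3::rat)" using h by simp
  hence "of_int (a^2) = (of_int (3*b^2) :: rat)" using b0 by (simp add: field_simps power2_eq_square)
  hence e: "a^2 = 3*b^2" by linarith
  show False
  proof (cases "even b")
    case True
    then have "even (a^2)" using e by auto
    hence "even a" by simp
    with True cop show False by (metis coprime_common_divisor even_two_times_div_two
      odd_one dvd_refl)
  next
    case False
    then have "odd (a^2)" using e by auto
    hence "odd a" by simp
    then obtain k where k: "a = 2*k+1" by (meson oddE)
    obtain m where m: "b = 2*m+1" using False by (meson oddE)
    have "4*(k^2+k) + 1 = 4*(3*(m^2+m)) + 3" using e unfolding k m by (simp add: algebra_simps power2_eq_square)
    thus False by presburger
  qed
qed

fun chebN :: "int \<Rightarrow> int \<Rightarrow> nat \<Rightarrow> int" where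
  "chebN p q 0 = 2"
| "chebN p q (Suc 0) = p"
| "chebN p q (Suc (Suc n)) = p * chebN p q (Suc n) - q^2 * chebN p q n"

lemma cos_rec: "cos (real (Suc (Suc k)) * x) = 2 * cos x * cos (real (Suc k) * x) - cos (real k * x)"
proof -
  have a: "real (Suc (Suc k)) * x = real (Suc k) * x + x" by (simp add: algebra_simps)
  have b: "real k * x = real (Suc k) * x - x" by (simp add: algebra_simps)
  show ?thesis unfolding a b cos_add cos_diff by simp
qed

lemma niven_cos:
  assumes c: "2 * cos x = of_rat c" and n: "n > 0" and cn: "cos (real n * x) = 1"
  shows "\<exists>i::int. c = of_int i"
proof -
  obtain p q where qb: "quotient_of c = (p,q)" by (cases "quotient_of c") auto
  have q0: "q > 0" using qb quotient_of_denom_pos by blast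
  have cop: "coprime p q" using qb quotient_of_coprime by blast
  have cq: "c = of_int p / of_int q" using qb quotient_of_div by blast
  have cx: "2 * cos x = of_int p / of_int q" using c cq by (simp add: of_rat_divide)
  have N: "real_of_int (chebN p q k) = of_int q ^ k * (2 * cos (real k * x))
     \<and> real_of_int (chebN p q (Suc k)) = of_int q ^ Suc k * (2 * cos (real (Suc k) * x))" for k
  proof (induction k)
    case 0
    then show ?case using cx q0 by simp
  next
    case (Suc k)
    then have IH1: "real_of_int (chebN p q k) = of_int q ^ k * (2 * cos (real k * x))"
      and IH2: "real_of_int (chebN p q (Suc k)) = of_int q ^ Suc k * (2 * cos (real (Suc k) * x))" by auto
    have "real_of_int (chebN p q (Suc (Suc k))) = real_of_int p * real_of_int (chebN p q (Suc k)) - real_of_int q ^ 2 * real_of_int (chebN p q k)"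
      by simp
    also have "\<dots> = of_int q ^ Suc (Suc k) * (2 * cos (real (Suc (Suc k)) * x))"
    proof -
      have pq: "real_of_int p = of_int q * (2 * cos x)" using cx q0 by (simp add: field_simps)
      show ?thesis apply (simp only: IH1 IH2 cos_rec pq) by (simp add: algebra_simps power2_eq_square)
    qed
    finally show ?case using IH2 by simp
  qed
  have C: "coprime (chebN p q k) q \<and> coprime (chebN p q (Suc k)) q" if "k > 0" for k
    using that
  proof (induction k)
    case 0 then show ?case by simp
  next
    case (Suc k)
    show ?case
    proof (cases "k = 0")
      case True
      show ?thesis
      proof
        show "coprime (chebN p q (Suc k)) q" using True cop by simp
        show "coprime (chebN p q (Suc (Suc k))) q"
        proof (rule coprimeI)
          fix d assume d1: "d dvd chebN p q (Suc (Suc k))" and d2: "d dvd q"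
          have "d dvd q^2 * chebN p q k" using d2 by (simp add: power2_eq_square)
          hence "d dvd p * chebN p q (Suc k)" using d1 by (metis chebN.simps(3) dvd_diff diff_add_cancel dvd_add)
          hence "d dvd p * p" using True by simp
          moreover have "coprime (p*p) q" using cop by simp
          ultimately show "is_unit d" using d2 coprime_common_divisor by blast
        qed
      qed
    next
      case False
      then have IH: "coprime (chebN p q (Suc k)) q" using Suc by auto
      show ?thesis
      proof
        show "coprime (chebN p q (Suc k)) q" by (rule IH)
        show "coprime (chebN p q (Suc (Suc k))) q"
        proof (rule coprimeI)
          fix d assume d1: "d dvd chebN p q (Suc (Suc k))" and d2: "d dvd q"
          have "d dvd q^2 * chebN p q k" using d2 by (simp add: power2_eq_square)
          hence "d dvd p * chebN p q (Suc k)" using d1 by (metis chebN.simps(3) dvd_diff diff_add_cancel dvd_add)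
          moreover have "coprime (p * chebN p q (Suc k)) q" using cop IH by simp
          ultimately show "is_unit d" using d2 coprime_common_divisor by blast
        qed
      qed
    qed
  qed
  have "real_of_int (chebN p q n) = of_int q ^ n * 2" using N[of n] cn by simp
  hence e: "chebN p q n = q ^ n * 2" by (metis of_int_eq_iff of_int_mult of_int_numeral of_int_power)
  have "coprime (chebN p q n) q" using C[OF n] by simp
  moreover have "q dvd chebN p q n" using e n by (simp add: dvd_power)
  ultimately have "is_unit q" by (meson coprime_common_divisor dvd_refl)
  hence "q = 1" using q0 by simp
  thus ?thesis using cq by auto
qed

lemma arctan_rat_pi:
  fixes u r :: rat
  assumes u: "u > 0" and h: "arctan (of_rat u) = of_rat r * pi"
  shows "u = 1"
proof -
  define t where "t = arctan (of_rat u)"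
  define c where "c = 2 * (1 - u^2) / (1 + u^2)"
  have sq: "sqrt (1 + (of_rat u)^2) ^ 2 = 1 + (of_rat u)^2" by simp
  have "cos (2*t) = cos t ^ 2 - sin t ^ 2" by (simp add: cos_double)
  also have "\<dots> = (1 - (of_rat u)^2) / (1 + (of_rat u)^2)"
    unfolding t_def cos_arctan sin_arctan power_divide sq by (simp add: diff_divide_distrib)
  finally have "2 * cos (2*t) = of_rat c" unfolding c_def
    by (simp add: of_rat_divide of_rat_diff of_rat_add of_rat_mult of_rat_power)
  moreover obtain m n where qb: "quotient_of r = (m,n)" by (cases "quotient_of r") auto
  moreover have n0: "n > 0" using qb quotient_of_denom_pos by blast
  moreover have "r = of_int m / of_int n" using qb quotient_of_div by blast
  ultimately have A: "2 * cos (2*t) = of_rat c" and B: "nat n > 0"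
     and "real (nat n) * (2*t) = 2 * pi * of_int m"
    using h unfolding t_def by (auto simp: of_rat_divide)
  hence "real (nat n) * (2*t) = 2 * pi * of_int m" by simp
  hence "cos (real (nat n) * (2*t)) = 1" by (simp only: cos_int_2pin)
  from niven_cos[OF A B this] obtain i where ci: "c = of_int i" by blast
  have p: "1 + u^2 > 0" by (simp add: add_pos_nonneg)
  have "c < 2" unfolding c_def using p u by (simp add: field_simps)
  moreover have "c > -2" unfolding c_def using p u by (simp add: field_simps)
  ultimately have "i = -1 \<or> i = 0 \<or> i = 1" using ci by auto
  moreover have "i \<noteq> -1"
  proof
    assume "i = -1"
    hence "2 * (1 - u^2) = - (1 + u^2)" using ci p unfolding c_def by (simp add: field_simps)
    hence "u^2 = 3" by simp
    thus False using no_rat_sq3 by blast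
  qed
  moreover have "i \<noteq> 1"
  proof
    assume "i = 1"
    hence "2 * (1 - u^2) = (1 + u^2)" using ci p unfolding c_def by (simp add: field_simps)
    hence "(1/u)^2 = 3" using u by (simp add: field_simps)
    thus False using no_rat_sq3 by blast
  qed
  ultimately have "i = 0" by blast
  hence "u^2 = 1" using ci p unfolding c_def by (simp add: field_simps)
  thus "u = 1" using u by (metis abs_of_pos power2_eq_1_iff abs_neg_one abs_one less_irrefl neg_0_less_iff_less zero_less_one)
qed

lemma cf_rem_irr: "x \<notin> \<rat> \<Longrightarrow> cf_rem x k \<notin> \<rat>"
proof (induction k)
  case 0 then show ?case by simp
next
  case (Suc k)
  show ?case
  proof
    assume "cf_rem x (Suc k) \<in> \<rat>"
    hence "1 / frac (cf_rem x k) \<in> \<rat>" by simp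
    hence "1 / (1 / frac (cf_rem x k)) \<in> \<rat>" by (rule Rats_divide[OF Rats_1])
    moreover have "1 / (1 / frac (cf_rem x k)) = frac (cf_rem x k)" by simp
    ultimately have "frac (cf_rem x k) \<in> \<rat>" by simp
    hence "frac (cf_rem x k) + of_int \<lfloor>cf_rem x k\<rfloor> \<in> \<rat>" by (intro Rats_add) auto
    moreover have "frac (cf_rem x k) + of_int \<lfloor>cf_rem x k\<rfloor> = cf_rem x k" by (simp add: frac_def)
    ultimately show False using Suc by simp
  qed
qed

lemma cf_frac_pos: "x \<notin> \<rat> \<Longrightarrow> frac (cf_rem x k) > 0"
proof -
  assume "x \<notin> \<rat>"
  hence n: "cf_rem x k \<notin> \<rat>" by (rule cf_rem_irr)
  have "frac (cf_rem x k) \<noteq> 0"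
  proof
    assume "frac (cf_rem x k) = 0"
    hence "cf_rem x k = of_int \<lfloor>cf_rem x k\<rfloor>" by (simp add: frac_def)
    thus False using n by (metis Rats_of_int)
  qed
  thus ?thesis using frac_ge_0[of "cf_rem x k"] by linarith
qed

lemma cf_q_pos: "x \<notin> \<rat> \<Longrightarrow> cf_q x (Suc k) \<ge> 1"
proof -
  assume h: "x \<notin> \<rat>"
  have "frac (cf_rem x k) > 0" "frac (cf_rem x k) < 1" using cf_frac_pos[OF h] frac_lt_1 by auto
  hence "1 / frac (cf_rem x k) \<ge> 1" by (simp add: field_simps)
  thus ?thesis by (simp add: cf_q_def)
qed

lemma Dsh_rec: "cf_Dsh x (Suc (Suc k)) = cf_q x k * cf_Dsh x (Suc k) + cf_Dsh x k"
  by simp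

declare cf_Dsh.simps(3)[simp del]

lemma Dsh_ge1: "x \<notin> \<rat> \<Longrightarrow> cf_Dsh x (Suc (Suc k)) \<ge> 1 \<and> cf_Dsh x (Suc (Suc (Suc k))) \<ge> 1"
proof (induction k)
  case 0
  have a: "cf_Dsh x (Suc (Suc 0)) = 1" using Dsh_rec[of x 0] by simp
  moreover have "cf_Dsh x (Suc (Suc (Suc 0))) = cf_q x 1" using Dsh_rec[of x 1] a by simp
  ultimately show ?case using cf_q_pos[OF 0, of 0] by simp
next
  case (Suc k)
  have "cf_q x (Suc (Suc k)) \<ge> 1" using cf_q_pos[OF Suc.prems, of "Suc k"] by simp
  moreover have "cf_Dsh x (Suc (Suc k)) \<ge> 1" "cf_Dsh x (Suc (Suc (Suc k))) \<ge> 1" using Suc by auto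
  ultimately have "cf_q x (Suc (Suc k)) * cf_Dsh x (Suc (Suc (Suc k))) \<ge> 0" by simp
  hence "cf_Dsh x (Suc (Suc (Suc (Suc k)))) \<ge> 1"
    unfolding Dsh_rec[of x "Suc (Suc k)"] using \<open>cf_Dsh x (Suc (Suc k)) \<ge> 1\<close> by linarith
  thus ?case using \<open>cf_Dsh x (Suc (Suc (Suc k))) \<ge> 1\<close> by simp
qed

lemma Dsh_nonneg: "x \<notin> \<rat> \<Longrightarrow> cf_Dsh x k \<ge> 0"
proof -
  assume h: "x \<notin> \<rat>"
  show ?thesis
  proof (cases k)
    case 0 then show ?thesis by simp
  next
    case (Suc m)
    then show ?thesis using Dsh_ge1[OF h, of "m-1"] by (cases m) auto
  qed
qed

lemma Dsh_lin: "x \<notin> \<rat> \<Longrightarrow> cf_Dsh x (Suc (Suc (Suc k))) \<ge> int k + 1"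
proof (induction k)
  case 0
  then show ?case using Dsh_ge1[of x 0] by simp
next
  case (Suc k)
  have "cf_q x (Suc (Suc k)) \<ge> 1" using cf_q_pos[OF Suc.prems, of "Suc k"] by simp
  moreover have "cf_Dsh x (Suc (Suc k)) \<ge> 1" "cf_Dsh x (Suc (Suc (Suc k))) \<ge> 0" using Dsh_ge1[OF Suc.prems, of k] by auto
  ultimately have "cf_q x (Suc (Suc k)) * cf_Dsh x (Suc (Suc (Suc k))) \<ge> 1 * cf_Dsh x (Suc (Suc (Suc k)))"
    by (intro mult_right_mono) auto
  hence "cf_Dsh x (Suc (Suc (Suc (Suc k)))) \<ge> cf_Dsh x (Suc (Suc (Suc k))) + 1"
    unfolding Dsh_rec[of x "Suc (Suc k)"] using \<open>cf_Dsh x (Suc (Suc k)) \<ge> 1\<close> by linarith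
  thus ?case using Suc by simp
qed

lemma Dsh_lin2: "x \<notin> \<rat> \<Longrightarrow> 2 * real_of_int (cf_Dsh x (Suc (Suc n))) \<ge> real n + 1"
proof (cases n)
  case 0
  assume h: "x \<notin> \<rat>"
  then show ?thesis using Dsh_ge1[OF h, of 0] 0 by simp
next
  case (Suc k)
  assume h: "x \<notin> \<rat>"
  have "cf_Dsh x (Suc (Suc (Suc k))) \<ge> int k + 1" "cf_Dsh x (Suc (Suc (Suc k))) \<ge> 1" using Dsh_lin[OF h, of k] Dsh_ge1[OF h, of k] by auto
  hence "2 * cf_Dsh x (Suc (Suc (Suc k))) \<ge> int k + 2" by linarith
  hence "2 * real_of_int (cf_Dsh x (Suc (Suc (Suc k)))) \<ge> real k + 2" by linarith
  then show ?thesis using Suc by simp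
qed

fun psi :: "real \<Rightarrow> real \<Rightarrow> real \<Rightarrow> nat \<Rightarrow> real" where
  "psi x t0 t1 0 = t0"
| "psi x t0 t1 (Suc 0) = t1"
| "psi x t0 t1 (Suc (Suc n)) = psi x t0 t1 n - of_int (cf_q x n) * psi x t0 t1 (Suc n)"

lemma psi_prop:
  assumes "x \<notin> \<rat>" "t1 > 0" "t0 = x * t1"
  shows "psi x t0 t1 k = cf_rem x k * psi x t0 t1 (Suc k) \<and> psi x t0 t1 (Suc k) > 0"
proof (induction k)
  case 0
  then show ?case using assms by simp
next
  case (Suc k)
  have fp: "frac (cf_rem x k) > 0" using cf_frac_pos[OF assms(1)] by blast
  have e: "psi x t0 t1 (Suc (Suc k)) = frac (cf_rem x k) * psi x t0 t1 (Suc k)"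
    using Suc by (simp add: frac_def cf_q_def algebra_simps del: psi.simps(1,2))
  show ?case using e fp Suc by simp
qed

lemma coef_inv:
  "real_of_int (coef_sh x a0 a1 (Suc k)) * psi x t0 t1 k + real_of_int (coef_sh x a0 a1 k) * psi x t0 t1 (Suc k)
   = of_int a0 * t0 + of_int a1 * t1"
proof (induction k)
  case 0 then show ?case by simp
next
  case (Suc k)
  have "real_of_int (coef_sh x a0 a1 (Suc (Suc k))) * psi x t0 t1 (Suc k) + real_of_int (coef_sh x a0 a1 (Suc k)) * psi x t0 t1 (Suc (Suc k))
    = real_of_int (coef_sh x a0 a1 (Suc k)) * psi x t0 t1 k + real_of_int (coef_sh x a0 a1 k) * psi x t0 t1 (Suc k)"
    by (simp add: ring_distribs del: psi.simps(1,2))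
  then show ?case using Suc.IH by linarith
qed

lemma Dsh_coef: "cf_Dsh x k = coef_sh x 0 1 k"
  by (induction x k rule: cf_Dsh.induct) (auto simp: Dsh_rec)


lemma alpha_irr:
  fixes a0 a1 :: int and u0 u1 :: rat
  assumes "u0 > u1" and "u1 > 0"
    and h: "of_int a0 * arctan (of_rat u0) + of_int a1 * arctan (of_rat u1) = pi / 4"
  shows "arctan (of_rat u0) / arctan (of_rat u1) \<notin> \<rat>"
proof
  define t0 where "t0 = arctan (of_rat u0)"
  define t1 where "t1 = arctan (of_rat u1)"
  have t1p: "t1 > 0" unfolding t1_def using assms(2) arctan_less_iff[of 0 "of_rat u1"] by simp
  assume "arctan (of_rat u0) / arctan (of_rat u1) \<in> \<rat>"
  then obtain s where s: "t0 / t1 = of_rat s" unfolding t0_def t1_def using Rats_cases by metis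
  have t0e: "t0 = of_rat s * t1" using s t1p by (simp add: field_simps)
  have "(of_int a0 * of_rat s + of_int a1) * t1 = pi / 4" using h t0e unfolding t0_def[symmetric] t1_def[symmetric]
    by (simp add: algebra_simps)
  hence e: "of_rat (of_int a0 * s + of_int a1) * t1 = pi / 4" by (simp add: of_rat_add of_rat_mult)
  define k where "k = of_int a0 * s + of_int a1"
  have k0: "k \<noteq> 0" using e pi_gt_zero unfolding k_def[symmetric] by auto
  have "t1 = of_rat (1 / (4*k)) * pi" using e k0 unfolding k_def[symmetric]
    by (simp add: of_rat_divide of_rat_mult field_simps)
  hence u1: "u1 = 1" using arctan_rat_pi[OF assms(2)] unfolding t1_def by blast
  have u0p: "u0 > 0" using assms by simp
  have "t0 = of_rat (s / (4*k)) * pi" using e k0 t0e unfolding k_def[symmetric]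
    by (simp add: of_rat_divide of_rat_mult field_simps)
  hence "u0 = 1" using arctan_rat_pi[OF u0p] unfolding t0_def by blast
  thus False using u1 assms(1) by simp
qed

theorem corollary1:
  fixes a0 a1 :: int and u0 u1 :: rat
  assumes "u0 > u1" and "u1 > 0"
    and "of_int a0 * arctan (of_rat u0) + of_int a1 * arctan (of_rat u1) = pi / 4"
  defines "\<alpha> \<equiv> arctan (of_rat u0) / arctan (of_rat u1)"
  shows "(\<lambda>n. real_of_int (coef_sh \<alpha> a0 a1 (n + 2)))
           \<sim>[at_top] (\<lambda>n. (pi / 4) / arctan (of_rat u1) * real_of_int (cf_Dsh \<alpha> (n + 2)))
       \<and> (\<forall>\<^sub>F n in at_top. coef_sh \<alpha> a0 a1 (n + 2) > 0)"
proof -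
  define t0 where "t0 = arctan (of_rat u0)"
  define t1 where "t1 = arctan (of_rat u1)"
  have t1p: "t1 > 0" unfolding t1_def using assms(2) arctan_less_iff[of 0 "of_rat u1"] by simp
  have irr: "\<alpha> \<notin> \<rat>" unfolding \<alpha>_def by (rule alpha_irr[OF assms(1-3)])
  have t0e: "t0 = \<alpha> * t1" unfolding \<alpha>_def using t1p unfolding t0_def t1_def by simp
  define K where "K = (pi / 4) / t1"
  have Kp: "K > 0" unfolding K_def using t1p by simp
  define c where "c = (\<lambda>k. real_of_int (coef_sh \<alpha> a0 a1 k))"
  define d where "d = (\<lambda>k. real_of_int (cf_Dsh \<alpha> k))"
  define p where "p = psi \<alpha> t0 t1"
  define e where "e = (\<lambda>k. c k - K * d k)"
  have pp: "p k > 0" for k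
  proof (cases k)
    case 0
    have "t0 > 0" unfolding t0_def using assms(1,2) arctan_less_iff[of 0 "of_rat u0"] by simp
    then show ?thesis using 0 unfolding p_def by simp
  next
    case (Suc m)
    then show ?thesis using psi_prop[OF irr t1p t0e, of m] unfolding p_def by simp
  qed
  have ci: "c (Suc k) * p k + c k * p (Suc k) = pi / 4" for k
    using coef_inv[of \<alpha> a0 a1 k t0 t1] assms(3) unfolding c_def p_def t0_def t1_def by simp
  have di: "d (Suc k) * p k + d k * p (Suc k) = t1" for k
    using coef_inv[of \<alpha> 0 1 k t0 t1] unfolding d_def p_def Dsh_coef by simp
  have ei: "e (Suc k) * p k + e k * p (Suc k) = 0" for k
  proof -
    have "e (Suc k) * p k + e k * p (Suc k) = (c (Suc k) * p k + c k * p (Suc k)) - K * (d (Suc k) * p k + d k * p (Suc k))"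
      unfolding e_def by (simp add: algebra_simps)
    also have "\<dots> = 0" unfolding ci di K_def using t1p by simp
    finally show ?thesis .
  qed
  have eabs: "\<bar>e k\<bar> * p 0 = \<bar>e 0\<bar> * p k" for k
  proof (induction k)
    case 0 then show ?case by simp
  next
    case (Suc k)
    have "e (Suc k) * p k = - (e k * p (Suc k))" using ei[of k] by linarith
    hence "\<bar>e (Suc k)\<bar> * p k = \<bar>e k\<bar> * p (Suc k)" using pp[of k] pp[of "Suc k"]
      by (metis abs_minus_cancel abs_mult abs_of_pos)
    hence "\<bar>e (Suc k)\<bar> * p 0 * p k = \<bar>e 0\<bar> * p (Suc k) * p k" using Suc by (simp add: algebra_simps)
    thus ?case using pp[of k] by simp
  qed
  have dnn: "d k \<ge> 0" for k unfolding d_def using Dsh_nonneg[OF irr] by simp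
  have pb: "p (Suc (Suc n)) \<le> t1" for n
  proof -
    have d1: "d (Suc (Suc (Suc n))) \<ge> 1" unfolding d_def using Dsh_ge1[OF irr, of n] by simp
    have "d (Suc (Suc n)) * p (Suc (Suc (Suc n))) \<ge> 0"
      using dnn[of "Suc (Suc n)"] pp[of "Suc (Suc (Suc n))"] by (simp add: less_imp_le)
    hence "d (Suc (Suc (Suc n))) * p (Suc (Suc n)) \<le> t1" using di[of "Suc (Suc n)"] by linarith
    moreover have "1 * p (Suc (Suc n)) \<le> d (Suc (Suc (Suc n))) * p (Suc (Suc n))"
      using d1 pp by (intro mult_right_mono) (auto simp: less_imp_le)
    ultimately show ?thesis by simp
  qed
  define B where "B = \<bar>e 0\<bar> * t1 / p 0"
  have eb: "\<bar>e (Suc (Suc n))\<bar> \<le> B" for n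
  proof -
    have "\<bar>e (Suc (Suc n))\<bar> = \<bar>e 0\<bar> * p (Suc (Suc n)) / p 0" using eabs[of "Suc (Suc n)"] pp[of 0] by (simp add: field_simps)
    also have "\<dots> \<le> \<bar>e 0\<bar> * t1 / p 0" using pb[of n] pp[of 0]
      by (intro divide_right_mono mult_left_mono) auto
    finally show ?thesis unfolding B_def .
  qed
  have dl: "2 * d (Suc (Suc n)) \<ge> real n + 1" for n unfolding d_def using Dsh_lin2[OF irr] by simp
  define r where "r = (\<lambda>n. e (Suc (Suc n)) / (K * d (Suc (Suc n))))"
  define h where "h = (\<lambda>n. (2 * B / K) * inverse (real (Suc n)))"
  have rb: "\<bar>r n\<bar> \<le> h n" for n
  proof -
    have dp: "d (Suc (Suc n)) > 0" using dl[of n] by linarith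
    have "\<bar>r n\<bar> = \<bar>e (Suc (Suc n))\<bar> / (K * d (Suc (Suc n)))" unfolding r_def using dp Kp by (simp add: abs_divide abs_mult)
    also have "\<dots> \<le> B / (K * d (Suc (Suc n)))" using eb[of n] dp Kp by (intro divide_right_mono) auto
    also have "\<dots> \<le> B / (K * ((real n + 1) / 2))"
      using dl[of n] dp Kp eb[of n] by (intro divide_left_mono mult_left_mono mult_pos_pos) auto
    also have "\<dots> = h n" unfolding h_def by (simp add: field_simps)
    finally show ?thesis .
  qed
  have hl: "h \<longlonglongrightarrow> 0" unfolding h_def by (rule tendsto_mult_right_zero[OF LIMSEQ_inverse_real_of_nat])
  have rl: "r \<longlonglongrightarrow> 0"
  proof (rule tendsto_sandwich[of "\<lambda>n. - h n" _ _ h])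
    have "- h n \<le> r n \<and> r n \<le> h n" for n using rb[of n] abs_le_iff[of "r n" "h n"] by linarith
    thus "\<forall>\<^sub>F n in sequentially. - h n \<le> r n" "\<forall>\<^sub>F n in sequentially. r n \<le> h n"
      by (auto intro: always_eventually)
    show "(\<lambda>n. - h n) \<longlonglongrightarrow> 0" using tendsto_minus[OF hl] by simp
  qed (rule hl)
  have fg: "c (Suc (Suc n)) / (K * d (Suc (Suc n))) = 1 + r n" for n
  proof -
    have dp: "d (Suc (Suc n)) > 0" using dl[of n] by linarith
    show ?thesis unfolding r_def e_def using dp Kp by (simp add: field_simps)
  qed
  have lim1: "(\<lambda>n. c (Suc (Suc n)) / (K * d (Suc (Suc n)))) \<longlonglongrightarrow> 1"
    unfolding fg using tendsto_add[OF tendsto_const rl, of 1] by simp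
  have A: "(\<lambda>n. real_of_int (coef_sh \<alpha> a0 a1 (n + 2)))
           \<sim>[at_top] (\<lambda>n. (pi / 4) / arctan (of_rat u1) * real_of_int (cf_Dsh \<alpha> (n + 2)))"
    by (rule asymp_equivI') (use lim1 in \<open>simp add: c_def d_def K_def t1_def\<close>)
  have "\<forall>\<^sub>F n in sequentially. c (Suc (Suc n)) / (K * d (Suc (Suc n))) > 0"
    using order_tendstoD(1)[OF lim1, of 0] by simp
  hence "\<forall>\<^sub>F n in sequentially. c (Suc (Suc n)) > 0"
  proof (rule eventually_mono)
    fix n assume a: "c (Suc (Suc n)) / (K * d (Suc (Suc n))) > 0"
    have dp: "d (Suc (Suc n)) > 0" using dl[of n] by linarith
    have "K * d (Suc (Suc n)) > 0" using dp Kp by simp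
    then show "c (Suc (Suc n)) > 0" using a by (simp add: zero_less_divide_iff)
  qed
  hence "\<forall>\<^sub>F n in at_top. coef_sh \<alpha> a0 a1 (n + 2) > 0"
    by (rule eventually_mono) (simp add: c_def del: coef_sh.simps)
  with A show ?thesis by blast
qed

end
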